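(* Let $(E,\mathcal{E},\mu)$ be a non-atomic $\sigma$-finite measure space with $\mu(E)=\infty$. Let $(a_n)_{n\ge1}$ be positive numbers with $a_n\to\infty$ and $a_n=o(n)$. For each $n$ let $P_n$ be a probability measure on $(E,\mathcal{E})$ such that $\mu_n:=(n/a_n)P_n$ satisfies $\mu_n(B)\le\mu_{n+1}(B)$ and $\mu_n(B)\to\mu(B)$ for every $B\in\mathcal{E}$. Then for any fixed $k\in\mathbb{N}_+$ and any $f\in L^2(\mu^k)$, $$\Big(\frac{n}{a_n}\Big)^{k/2}\int_{E^k} f\,dP_n^k\to0\qquad (n\to\infty).$$
   Context: $\mu^k$ and $P_n^k$ denote $k$-fold product measures on $E^k$. *)

theory Defs
  imports "HOL-Probability.Probability" "HOL-Library.Landau_Symbols"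
begin

definition non_atomic :: "'a measure \<Rightarrow> bool" where
  "non_atomic M \<longleftrightarrow> (\<forall>A\<in>sets M. 0 < emeasure M A \<longrightarrow>
      (\<exists>B\<in>sets M. B \<subseteq> A \<and> 0 < emeasure M B \<and> emeasure M B < emeasure M A))"

definition square_integrable :: "'a measure \<Rightarrow> ('a \<Rightarrow> real) \<Rightarrow> bool" where
  "square_integrable M f \<longleftrightarrow> f \<in> borel_measurable M \<and> integrable M (\<lambda>x. (f x)\<^sup>2)"

end

theory Submission
  imports Defs
begin

lemma single_le:
  fixes P M :: "'a measure" and r :: real
  assumes sets: "sets P = sets M" and r: "r \<ge> 0"
    and le: "\<And>B. B \<in> sets M \<Longrightarrow> emeasure P B \<le> ennreal r * emeasure M B"
    and g: "g \<in> borel_measurable M"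
  shows "(\<integral>\<^sup>+x. g x \<partial>P) \<le> ennreal r * (\<integral>\<^sup>+x. g x \<partial>M)"
proof -
  have "P \<le> scale_measure (ennreal r) M"
  proof -
    have "emeasure P A \<le> ennreal r * emeasure M A" for A
      using le[of A] emeasure_notin_sets[of A P] sets by (cases "A \<in> sets M") auto
    then show ?thesis
      unfolding le_measure_iff using sets sets_eq_imp_space_eq[OF sets]
      by (auto simp: space_scale_measure le_fun_def)
  qed
  then have "(\<integral>\<^sup>+x. g x \<partial>P) \<le> (\<integral>\<^sup>+x. g x \<partial>scale_measure (ennreal r) M)"
    by (intro nn_integral_mono_measure) (auto simp: sets)
  also have "\<dots> = ennreal r * (\<integral>\<^sup>+x. g x \<partial>M)"
    using g by (rule nn_integral_scale_measure)
  finally show ?thesis .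
qed

lemma amgm:
  fixes t y :: real
  assumes t: "t > 0"
  shows "\<bar>y\<bar> \<le> t/2 * y\<^sup>2 + 1/(2*t)"
proof -
  have "0 \<le> (t * \<bar>y\<bar> - 1)\<^sup>2" by simp
  then have "2 * t * \<bar>y\<bar> \<le> t\<^sup>2 * y\<^sup>2 + 1" by (simp add: power2_eq_square algebra_simps)
  then have "\<bar>y\<bar> \<le> (t\<^sup>2 * y\<^sup>2 + 1) / (2 * t)" using t by (simp add: field_simps)
  also have "\<dots> = t/2 * y\<^sup>2 + 1/(2*t)" using t by (simp add: field_simps power2_eq_square)
  finally show ?thesis .
qed

lemma enn3: "0 \<le> a \<Longrightarrow> 0 \<le> b \<Longrightarrow> 0 \<le> c \<Longrightarrow>
  ennreal a * (ennreal b * ennreal c) = ennreal (a * (b * c))"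
  by (simp add: ennreal_mult)

lemma enn4: "0 \<le> a \<Longrightarrow> 0 \<le> b \<Longrightarrow> 0 \<le> c \<Longrightarrow> 0 \<le> d \<Longrightarrow>
  ennreal a + ennreal b + ennreal c + ennreal d = ennreal (a + b + c + d)"
  by (simp add: ennreal_plus)

lemma pim_le:
  fixes P M :: "'a measure" and r :: real
  assumes sfM: "sigma_finite_measure M" and pP: "prob_space P" and sets: "sets P = sets M" and r: "r \<ge> 0"
    and le: "\<And>B. B \<in> sets M \<Longrightarrow> emeasure P B \<le> ennreal r * emeasure M B"
  shows "finite I \<Longrightarrow> h \<in> borel_measurable (PiM I (\<lambda>_. M)) \<Longrightarrow>
     (\<integral>\<^sup>+x. h x \<partial>PiM I (\<lambda>_. P)) \<le> ennreal (r ^ card I) * (\<integral>\<^sup>+x. h x \<partial>PiM I (\<lambda>_. M))"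
proof (induction I arbitrary: h rule: finite_induct)
  case empty
  then show ?case by (simp add: PiM_empty)
next
  case (insert i I)
  interpret sM: sigma_finite_measure M by (rule sfM)
  interpret pP: prob_space P by (rule pP)
  interpret PM: product_sigma_finite "\<lambda>_. M" by (simp add: product_sigma_finite_def sfM)
  interpret PP: product_sigma_finite "\<lambda>_. P" by (simp add: product_sigma_finite_def pP.sigma_finite_measure_axioms)
  have setsI: "sets (PiM J (\<lambda>_. P)) = sets (PiM J (\<lambda>_. M))" for J
    by (rule sets_PiM_cong) (auto simp: sets)
  have hM[measurable]: "h \<in> borel_measurable (PiM (insert i I) (\<lambda>_. M))" by fact
  have hP: "h \<in> borel_measurable (PiM (insert i I) (\<lambda>_. P))"
    using hM measurable_cong_sets[OF setsI refl] by blast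
  define G where "G x = (\<integral>\<^sup>+y. h (x(i:=y)) \<partial>M)" for x
  have GM[measurable]: "G \<in> borel_measurable (PiM I (\<lambda>_. M))"
    unfolding G_def by measurable
  have GP: "G \<in> borel_measurable (PiM I (\<lambda>_. P))"
    using GM measurable_cong_sets[OF setsI refl] by blast
  have "(\<integral>\<^sup>+x. h x \<partial>PiM (insert i I) (\<lambda>_. P)) = (\<integral>\<^sup>+x. (\<integral>\<^sup>+y. h (x(i:=y)) \<partial>P) \<partial>PiM I (\<lambda>_. P))"
    using PP.product_nn_integral_insert[OF insert(1,2) hP] .
  also have "\<dots> \<le> (\<integral>\<^sup>+x. ennreal r * G x \<partial>PiM I (\<lambda>_. P))"
  proof (rule nn_integral_mono)
    fix x assume x: "x \<in> space (PiM I (\<lambda>_. P))"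
    then have x': "x \<in> space (PiM I (\<lambda>_. M))" using sets_eq_imp_space_eq[OF setsI[of I]] by simp
    have "(\<lambda>y. h (x(i:=y))) \<in> borel_measurable M"
      using measurable_component_update[OF x' insert(2)] hM by (simp add: measurable_comp)
    then show "(\<integral>\<^sup>+y. h (x(i:=y)) \<partial>P) \<le> ennreal r * G x"
      unfolding G_def using single_le[OF sets r le, of "\<lambda>y. h (x(i:=y))"] by simp
  qed
  also have "\<dots> = ennreal r * (\<integral>\<^sup>+x. G x \<partial>PiM I (\<lambda>_. P))"
    using GP by (rule nn_integral_cmult)
  also have "\<dots> \<le> ennreal r * (ennreal (r ^ card I) * (\<integral>\<^sup>+x. G x \<partial>PiM I (\<lambda>_. M)))"
    using insert(3)[OF GM] by (intro mult_left_mono) auto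
  also have "\<dots> = ennreal (r ^ card (insert i I)) * (\<integral>\<^sup>+x. h x \<partial>PiM (insert i I) (\<lambda>_. M))"
    using PM.product_nn_integral_insert[OF insert(1,2) hM] insert(1,2) r
    by (simp add: G_def ennreal_mult mult.assoc)
  finally show ?case .
qed

theorem lemma3:
  fixes M :: "'a measure" and P :: "nat \<Rightarrow> 'a measure" and a :: "nat \<Rightarrow> real"
    and k :: nat and f :: "(nat \<Rightarrow> 'a) \<Rightarrow> real"
  assumes "sigma_finite_measure M"
    and "non_atomic M"
    and "emeasure M (space M) = \<infinity>"
    and "\<And>n. n \<ge> 1 \<Longrightarrow> a n > 0"
    and "filterlim a at_top sequentially"
    and "a \<in> o(\<lambda>n. real n)"
    and "\<And>n. n \<ge> 1 \<Longrightarrow> prob_space (P n)"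
    and "\<And>n. n \<ge> 1 \<Longrightarrow> sets (P n) = sets M"
    and "\<And>n B. n \<ge> 1 \<Longrightarrow> B \<in> sets M \<Longrightarrow>
           ennreal (real n / a n) * emeasure (P n) B
             \<le> ennreal (real (Suc n) / a (Suc n)) * emeasure (P (Suc n)) B"
    and "\<And>B. B \<in> sets M \<Longrightarrow>
           ((\<lambda>n. ennreal (real n / a n) * emeasure (P n) B) \<longlongrightarrow> emeasure M B) sequentially"
    and "k \<ge> 1"
    and "square_integrable (PiM {..<k} (\<lambda>_. M)) f"
  shows "((\<lambda>n. (real n / a n) powr (real k / 2) * (\<integral>x. f x \<partial>(PiM {..<k} (\<lambda>_. P n))))
           \<longlongrightarrow> 0) sequentially"
  proof -
  define F where "F = PiM {..<k} (\<lambda>_. M)"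
  define Q where "Q n = PiM {..<k} (\<lambda>_. P n)" for n
  define r where "r n = a n / real n" for n
  define K where "K = real k"
  interpret sM: sigma_finite_measure M by fact
  interpret PM: product_sigma_finite "\<lambda>_. M" by (simp add: product_sigma_finite_def assms(1))
  have fM[measurable]: "f \<in> borel_measurable F" and f2int: "integrable F (\<lambda>x. (f x)\<^sup>2)"
    using assms(12) unfolding square_integrable_def F_def by auto
  define S where "S = (\<integral>x. (f x)\<^sup>2 \<partial>F)"
  have S: "(\<integral>\<^sup>+x. ennreal ((f x)\<^sup>2) \<partial>F) = ennreal S"
    using nn_integral_eq_integral[OF f2int] by (simp add: S_def)
  have S0: "S \<ge> 0" unfolding S_def by simp
  have setsQ: "sets (Q n) = sets F" if "n \<ge> 1" for n
    unfolding Q_def F_def by (rule sets_PiM_cong) (auto simp: assms(8)[OF that])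
  have spaceQ: "space (Q n) = space F" if "n \<ge> 1" for n
    using sets_eq_imp_space_eq[OF setsQ[OF that]] .
  have probQ: "prob_space (Q n)" if "n \<ge> 1" for n
    unfolding Q_def by (rule prob_space_PiM) (simp add: assms(7)[OF that])
  have rpos: "r n > 0" if "n \<ge> 1" for n
    using assms(4)[OF that] that unfolding r_def by simp
  have Ple: "emeasure (P n) B \<le> ennreal (r n) * emeasure M B" if n: "n \<ge> 1" and B: "B \<in> sets M" for n B
  proof -
    define u where "u m = ennreal (real m / a m) * emeasure (P m) B" for m
    have mono: "u n \<le> u m" if "n \<le> m" for m
      using that
    proof (induction m rule: dec_induct)
      case (step m)
      then show ?case using assms(9)[OF _ B, of m] n unfolding u_def by (meson order.trans order_trans)
    qed simp
    have "u n \<le> emeasure M B"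
      by (rule LIMSEQ_le_const[OF assms(10)[OF B, folded u_def]]) (use mono in auto)
    then have "ennreal (r n) * u n \<le> ennreal (r n) * emeasure M B" by (rule mult_left_mono) simp
    moreover have "ennreal (r n) * u n = emeasure (P n) B"
    proof -
      have "ennreal (r n) * u n = ennreal (r n * (real n / a n)) * emeasure (P n) B"
      proof -
        have "ennreal (r n * (real n / a n)) = ennreal (r n) * ennreal (real n / a n)"
          by (rule ennreal_mult) (use rpos[OF n] assms(4)[OF n] in auto)
        then show ?thesis unfolding u_def by (simp only: mult.assoc)
      qed
      also have "r n * (real n / a n) = 1" unfolding r_def using assms(4)[OF n] n by simp
      finally show ?thesis by simp
    qed
    ultimately show ?thesis by simp
  qed
  have Qle: "(\<integral>\<^sup>+x. h x \<partial>Q n) \<le> ennreal (r n ^ k) * (\<integral>\<^sup>+x. h x \<partial>F)"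
    if n: "n \<ge> 1" and h: "h \<in> borel_measurable F" for n h
    using pim_le[OF assms(1) assms(7)[OF n] assms(8)[OF n] less_imp_le[OF rpos[OF n]] Ple[OF n], of "{..<k}" h] h
    by (simp add: Q_def F_def)
  have r0: "r \<longlonglongrightarrow> 0"
    using smalloD_tendsto[OF assms(6)] unfolding r_def by simp
  define s where "s n = r n powr (K/2)" for n
  have K0: "K > 0" using assms(11) by (simp add: K_def)
  have s0: "s \<longlonglongrightarrow> 0" unfolding s_def
    by (rule tendsto_zero_powrI[OF r0 tendsto_const])
       (use K0 rpos in \<open>auto simp: eventually_sequentially intro!: exI[of _ 1] less_imp_le\<close>)
  have main: "eventually (\<lambda>n. \<bar>(real n / a n) powr (real k / 2) * (\<integral>x. f x \<partial>(PiM {..<k} (\<lambda>_. P n)))\<bar> \<le> 2 * \<epsilon>) sequentially"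
    if \<epsilon>: "\<epsilon> > 0" for \<epsilon>
  proof -
    obtain A where A: "range A \<subseteq> sets M" "(\<Union>i. A i) = space M" "\<And>i. emeasure M (A i) \<noteq> \<infinity>" "incseq A"
      using sM.sigma_finite_incseq by blast
    define E where "E i = PiE {..<k} (\<lambda>_. A i)" for i
    have Esets[measurable]: "E i \<in> sets F" for i
      unfolding E_def F_def using A(1) by (intro sets_PiM_I_finite) auto
    have spF: "space F = PiE {..<k} (\<lambda>_. space M)" unfolding F_def by (simp add: space_PiM)
    have lim: "(\<lambda>i. \<integral>x. (f x)\<^sup>2 * indicator (space F - E i) x \<partial>F) \<longlonglongrightarrow> (\<integral>x. 0 \<partial>F)"
    proof (rule integral_dominated_convergence[where w="\<lambda>x. (f x)\<^sup>2"])
      show "AE x in F. (\<lambda>i. (f x)\<^sup>2 * indicator (space F - E i) x) \<longlonglongrightarrow> 0"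
      proof (rule AE_I2)
        fix x assume x: "x \<in> space F"
        have "\<forall>j\<in>{..<k}. eventually (\<lambda>i. x j \<in> A i) sequentially"
        proof
          fix j assume j: "j \<in> {..<k}"
          then have "x j \<in> space M" using x spF by auto
          then obtain N where "x j \<in> A N" using A(2) by auto
          then show "eventually (\<lambda>i. x j \<in> A i) sequentially"
            using A(4) unfolding eventually_sequentially incseq_def by blast
        qed
        then have "eventually (\<lambda>i. \<forall>j\<in>{..<k}. x j \<in> A i) sequentially"
          by (rule eventually_ball_finite[rotated]) simp
        then have "eventually (\<lambda>i. (f x)\<^sup>2 * indicator (space F - E i) x = 0) sequentially"
        proof eventually_elim
          case (elim i)
          then have "x \<in> E i" using x spF unfolding E_def by (auto simp: PiE_iff)
          then show ?case by simp
        qed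
        then show "(\<lambda>i. (f x)\<^sup>2 * indicator (space F - E i) x) \<longlonglongrightarrow> 0"
          by (rule tendsto_eventually)
      qed
      show "AE x in F. norm ((f x)\<^sup>2 * indicator (space F - E i) x) \<le> (f x)\<^sup>2" for i
        by (auto split: split_indicator)
    qed (use f2int in auto)
    then have "eventually (\<lambda>i. (\<integral>x. (f x)\<^sup>2 * indicator (space F - E i) x \<partial>F) < \<epsilon>\<^sup>2) sequentially"
      using \<epsilon> by (simp add: order_tendsto_iff)
    then obtain m where m: "(\<integral>x. (f x)\<^sup>2 * indicator (space F - E m) x \<partial>F) < \<epsilon>\<^sup>2"
      by (auto simp: eventually_sequentially)
    define C where "C = space F - E m"
    define D where "D = E m"
    define T where "T = (\<integral>x. (f x)\<^sup>2 * indicator C x \<partial>F)"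
    have Csets[measurable]: "C \<in> sets F" unfolding C_def by simp
    have Dsets[measurable]: "D \<in> sets F" unfolding D_def by simp
    have Tle: "T \<le> \<epsilon>\<^sup>2" using m unfolding T_def C_def by simp
    have T: "(\<integral>\<^sup>+x. ennreal ((f x)\<^sup>2 * indicator C x) \<partial>F) = ennreal T"
      unfolding T_def by (rule nn_integral_eq_integral) (auto intro!: integrable_real_mult_indicator f2int)
    define mB where "mB = measure M (A m)"
    have mB0: "mB \<ge> 0" unfolding mB_def by simp
    have FD: "emeasure F D = ennreal (mB ^ k)"
    proof -
      have "emeasure F D = (\<Prod>i\<in>{..<k}. emeasure M (A m))"
        unfolding F_def D_def E_def using A(1) by (intro PM.emeasure_PiM) auto
      also have "\<dots> = ennreal mB ^ k" unfolding mB_def using A(3)[of m]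
        by (simp add: emeasure_eq_ennreal_measure)
      finally show ?thesis using mB0 by (simp add: ennreal_power)
    qed
    define Cst where "Cst = (S + mB ^ k) / 2"
    have Cst0: "Cst \<ge> 0" using S0 mB0 unfolding Cst_def by simp
    have bound: "\<bar>\<integral>x. f x \<partial>Q n\<bar> \<le> (s n)\<^sup>2 * Cst + s n * \<epsilon>" if n: "n \<ge> 1" for n
    proof -
      interpret Qp: prob_space "Q n" by (rule probQ[OF n])
      define rr where "rr = r n"
      define ss where "ss = s n"
      have r: "rr > 0" using rpos[OF n] unfolding rr_def .
      have sp: "ss > 0" unfolding ss_def s_def using r unfolding rr_def by simp
      have ss2: "ss\<^sup>2 = rr ^ k"
      proof -
        have "ss\<^sup>2 = rr powr (K/2) * rr powr (K/2)" unfolding ss_def s_def rr_def by (simp add: power2_eq_square)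
        also have "\<dots> = rr powr K" by (simp add: powr_add[symmetric])
        also have "\<dots> = rr ^ k" unfolding K_def using r by (simp add: powr_realpow)
        finally show ?thesis .
      qed
      define t where "t = 1 / (ss * \<epsilon>)"
      have t: "t > 0" unfolding t_def using sp \<epsilon> by simp
      have I1: "(\<integral>\<^sup>+x. ennreal ((f x)\<^sup>2) \<partial>Q n) \<le> ennreal (rr ^ k) * ennreal S"
        using Qle[OF n, of "\<lambda>x. ennreal ((f x)\<^sup>2)"] S unfolding rr_def by simp
      have I2: "(\<integral>\<^sup>+x. ennreal (indicator D x) \<partial>Q n) \<le> ennreal (rr ^ k) * ennreal (mB ^ k)"
      proof -
        have "(\<integral>\<^sup>+x. ennreal (indicator D x) \<partial>Q n) = emeasure (Q n) D"
          using Dsets setsQ[OF n] by (simp add: ennreal_indicator)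
        also have "\<dots> = (\<integral>\<^sup>+x. indicator D x \<partial>Q n)"
          using Dsets setsQ[OF n] by simp
        also have "\<dots> \<le> ennreal (rr ^ k) * (\<integral>\<^sup>+x. indicator D x \<partial>F)"
          using Qle[OF n, of "indicator D"] unfolding rr_def by simp
        also have "\<dots> = ennreal (rr ^ k) * ennreal (mB ^ k)" using FD Dsets by simp
        finally show ?thesis .
      qed
      have I3: "(\<integral>\<^sup>+x. ennreal ((f x)\<^sup>2 * indicator C x) \<partial>Q n) \<le> ennreal (rr ^ k) * ennreal T"
        using Qle[OF n, of "\<lambda>x. ennreal ((f x)\<^sup>2 * indicator C x)"] T unfolding rr_def by simp
      have cm: "(\<integral>\<^sup>+x. ennreal (c * g x) \<partial>Q n) = ennreal c * (\<integral>\<^sup>+x. ennreal (g x) \<partial>Q n)"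
        if "c \<ge> 0" "\<And>x. g x \<ge> 0" "g \<in> borel_measurable F" for c g
      proof -
        have "g \<in> borel_measurable (Q n)" using that(3) measurable_cong_sets[OF setsQ[OF n] refl] by blast
        then show ?thesis using that by (simp add: ennreal_mult nn_integral_cmult)
      qed
      have pw: "ennreal \<bar>f x\<bar> \<le> ennreal (1/2 * (f x)\<^sup>2) + ennreal (1/2 * indicator D x)
                 + ennreal (t/2 * ((f x)\<^sup>2 * indicator C x)) + ennreal (1/(2*t))"
        if x: "x \<in> space (Q n)" for x
      proof -
        have xF: "x \<in> space F" using x spaceQ[OF n] by simp
        have real: "\<bar>f x\<bar> \<le> 1/2 * (f x)\<^sup>2 + 1/2 * indicator D x
                 + t/2 * ((f x)\<^sup>2 * indicator C x) + 1/(2*t)"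
        proof (cases "x \<in> D")
          case True
          then have "\<bar>f x\<bar> \<le> 1/2 * (f x)\<^sup>2 + 1/2" using amgm[of 1 "f x"] by simp
          moreover have "0 \<le> t/2 * ((f x)\<^sup>2 * indicator C x)" using t by simp
          moreover have "0 \<le> 1/(2*t)" using t by simp
          moreover have "indicator D x = (1::real)" using True by simp
          ultimately show ?thesis by linarith
        next
          case False
          then have "x \<in> C" using xF unfolding C_def D_def by simp
          then have "indicator C x = (1::real)" by simp
          moreover have "0 \<le> 1/2 * (f x)\<^sup>2" by simp
          moreover have "0 \<le> 1/2 * (indicator D x :: real)" by simp
          moreover note amgm[OF t, of "f x"]
          moreover have "t/2 * ((f x)\<^sup>2 * indicator C x) = t/2 * (f x)\<^sup>2"
            using \<open>x \<in> C\<close> by simp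
          ultimately show ?thesis by linarith
        qed
        have "ennreal \<bar>f x\<bar> \<le> ennreal (1/2 * (f x)\<^sup>2 + 1/2 * indicator D x
                 + t/2 * ((f x)\<^sup>2 * indicator C x) + 1/(2*t))"
          using real by (rule ennreal_leI)
        also have "\<dots> = ennreal (1/2 * (f x)\<^sup>2) + ennreal (1/2 * indicator D x)
                 + ennreal (t/2 * ((f x)\<^sup>2 * indicator C x)) + ennreal (1/(2*t))"
          using t by (simp add: ennreal_plus)
        finally show ?thesis .
      qed
      have "(\<integral>\<^sup>+x. ennreal \<bar>f x\<bar> \<partial>Q n) \<le> (\<integral>\<^sup>+x. ennreal (1/2 * (f x)\<^sup>2) + ennreal (1/2 * indicator D x)
                 + ennreal (t/2 * ((f x)\<^sup>2 * indicator C x)) + ennreal (1/(2*t)) \<partial>Q n)"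
        by (rule nn_integral_mono) (rule pw)
      also have "\<dots> = (\<integral>\<^sup>+x. ennreal (1/2 * (f x)\<^sup>2) \<partial>Q n) + (\<integral>\<^sup>+x. ennreal (1/2 * indicator D x) \<partial>Q n)
                 + (\<integral>\<^sup>+x. ennreal (t/2 * ((f x)\<^sup>2 * indicator C x)) \<partial>Q n) + (\<integral>\<^sup>+x. ennreal (1/(2*t)) \<partial>Q n)"
      proof -
        have ms: "(\<lambda>x. ennreal (1/2 * (f x)\<^sup>2)) \<in> borel_measurable (Q n)"
          "(\<lambda>x. ennreal (1/2 * indicator D x)) \<in> borel_measurable (Q n)"
          "(\<lambda>x. ennreal (t/2 * ((f x)\<^sup>2 * indicator C x))) \<in> borel_measurable (Q n)"
          "(\<lambda>x. ennreal (1/(2*t))) \<in> borel_measurable (Q n)"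
        proof -
          have "(\<lambda>x. ennreal (1/2 * (f x)\<^sup>2)) \<in> borel_measurable F"
            "(\<lambda>x. ennreal (1/2 * indicator D x)) \<in> borel_measurable F"
            "(\<lambda>x. ennreal (t/2 * ((f x)\<^sup>2 * indicator C x))) \<in> borel_measurable F"
            "(\<lambda>x. ennreal (1/(2*t))) \<in> borel_measurable F"
            by simp_all
          then show "(\<lambda>x. ennreal (1/2 * (f x)\<^sup>2)) \<in> borel_measurable (Q n)"
            "(\<lambda>x. ennreal (1/2 * indicator D x)) \<in> borel_measurable (Q n)"
            "(\<lambda>x. ennreal (t/2 * ((f x)\<^sup>2 * indicator C x))) \<in> borel_measurable (Q n)"
            "(\<lambda>x. ennreal (1/(2*t))) \<in> borel_measurable (Q n)"
            using measurable_cong_sets[OF setsQ[OF n] refl] by blast+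
        qed
        show ?thesis
        proof -
          have s2: "(\<lambda>x. ennreal (1/2 * (f x)\<^sup>2) + ennreal (1/2 * indicator D x)) \<in> borel_measurable (Q n)"
            using ms(1,2) by (rule borel_measurable_add)
          have s3: "(\<lambda>x. ennreal (1/2 * (f x)\<^sup>2) + ennreal (1/2 * indicator D x)
                 + ennreal (t/2 * ((f x)\<^sup>2 * indicator C x))) \<in> borel_measurable (Q n)"
            using s2 ms(3) by (rule borel_measurable_add)
          show ?thesis
            using nn_integral_add[OF s3 ms(4)] nn_integral_add[OF s2 ms(3)] nn_integral_add[OF ms(1) ms(2)]
            by simp
        qed
      qed
      also have "\<dots> = ennreal (1/2) * (\<integral>\<^sup>+x. ennreal ((f x)\<^sup>2) \<partial>Q n)
                 + ennreal (1/2) * (\<integral>\<^sup>+x. ennreal (indicator D x) \<partial>Q n)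
                 + ennreal (t/2) * (\<integral>\<^sup>+x. ennreal ((f x)\<^sup>2 * indicator C x) \<partial>Q n) + ennreal (1/(2*t))"
      proof -
        have "(\<integral>\<^sup>+x. ennreal (1/2 * (f x)\<^sup>2) \<partial>Q n) = ennreal (1/2) * (\<integral>\<^sup>+x. ennreal ((f x)\<^sup>2) \<partial>Q n)"
          by (rule cm) auto
        moreover have "(\<integral>\<^sup>+x. ennreal (1/2 * indicator D x) \<partial>Q n) = ennreal (1/2) * (\<integral>\<^sup>+x. ennreal (indicator D x) \<partial>Q n)"
          by (rule cm) auto
        moreover have "(\<integral>\<^sup>+x. ennreal (t/2 * ((f x)\<^sup>2 * indicator C x)) \<partial>Q n) = ennreal (t/2) * (\<integral>\<^sup>+x. ennreal ((f x)\<^sup>2 * indicator C x) \<partial>Q n)"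
          by (rule cm) (use t in auto)
        moreover have "(\<integral>\<^sup>+x. ennreal (1/(2*t)) \<partial>Q n) = ennreal (1/(2*t))"
          by (simp add: Qp.emeasure_space_1)
        ultimately show ?thesis by simp
      qed
      also have "\<dots> \<le> ennreal (1/2) * (ennreal (rr ^ k) * ennreal S)
                 + ennreal (1/2) * (ennreal (rr ^ k) * ennreal (mB ^ k))
                 + ennreal (t/2) * (ennreal (rr ^ k) * ennreal T) + ennreal (1/(2*t))"
        by (intro add_mono mult_left_mono I1 I2 I3 order_refl) auto
      also have "\<dots> = ennreal (1/2 * (rr ^ k * S) + 1/2 * (rr ^ k * mB ^ k) + t/2 * (rr ^ k * T) + 1/(2*t))"
      proof -
        have T0: "T \<ge> 0" unfolding T_def by (intro integral_nonneg_AE) (auto split: split_indicator)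
        have e1: "ennreal (1/2) * (ennreal (rr ^ k) * ennreal S) = ennreal (1/2 * (rr ^ k * S))"
          by (rule enn3) (use r S0 in auto)
        have e2: "ennreal (1/2) * (ennreal (rr ^ k) * ennreal (mB ^ k)) = ennreal (1/2 * (rr ^ k * mB ^ k))"
          by (rule enn3) (use r mB0 in auto)
        have e3: "ennreal (t/2) * (ennreal (rr ^ k) * ennreal T) = ennreal (t/2 * (rr ^ k * T))"
          by (rule enn3) (use r T0 t in auto)
        show ?thesis unfolding e1 e2 e3
          by (rule enn4) (use r S0 mB0 T0 t in auto)
      qed
      also have "1/2 * (rr ^ k * S) + 1/2 * (rr ^ k * mB ^ k) + t/2 * (rr ^ k * T) + 1/(2*t)
                 \<le> ss\<^sup>2 * Cst + ss * \<epsilon>"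
      proof -
        have "t/2 * (rr ^ k * T) \<le> t/2 * (rr ^ k * \<epsilon>\<^sup>2)"
          using t r Tle by (intro mult_left_mono) auto
        also have "\<dots> = ss * \<epsilon> / 2" unfolding t_def ss2[symmetric] using sp \<epsilon>
          by (simp add: field_simps power2_eq_square)
        finally have a: "t/2 * (rr ^ k * T) \<le> ss * \<epsilon> / 2" .
        have b: "1/(2*t) = ss * \<epsilon> / 2" unfolding t_def by simp
        show ?thesis using a b unfolding Cst_def ss2 by (simp add: field_simps)
      qed
      finally have bnd: "(\<integral>\<^sup>+x. ennreal \<bar>f x\<bar> \<partial>Q n) \<le> ennreal (ss\<^sup>2 * Cst + ss * \<epsilon>)"
        by (simp add: ennreal_leI)
      show ?thesis
      proof (cases "integrable (Q n) f")
        case True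
        have "ennreal \<bar>\<integral>x. f x \<partial>Q n\<bar> \<le> (\<integral>\<^sup>+x. ennreal \<bar>f x\<bar> \<partial>Q n)"
          using integral_norm_bound_ennreal[OF True] by simp
        also note bnd
        finally show ?thesis unfolding ss_def using sp \<epsilon> Cst0
          by (subst (asm) ennreal_le_iff) (auto simp: ss_def)
      next
        case False
        then show ?thesis using sp \<epsilon> Cst0 by (simp add: not_integrable_integral_eq ss_def[symmetric])
      qed
    qed
    have "eventually (\<lambda>n. s n * Cst < \<epsilon>) sequentially"
    proof -
      have "(\<lambda>n. s n * Cst) \<longlonglongrightarrow> 0 * Cst" by (intro tendsto_intros s0)
      then show ?thesis using \<epsilon> by (simp add: order_tendsto_iff)
    qed
    moreover have "eventually (\<lambda>n. n \<ge> 1) sequentially" by (auto simp: eventually_sequentially)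
    ultimately show ?thesis
    proof eventually_elim
      case (elim n)
      have r: "r n > 0" using rpos elim by simp
      have sp: "s n > 0" unfolding s_def using r by simp
      have eq: "(real n / a n) powr (real k / 2) = 1 / s n"
        unfolding s_def r_def K_def using r unfolding r_def
        by (simp add: powr_divide)
      have "\<bar>(real n / a n) powr (real k / 2) * (\<integral>x. f x \<partial>(PiM {..<k} (\<lambda>_. P n)))\<bar>
          = \<bar>\<integral>x. f x \<partial>Q n\<bar> / s n" unfolding eq Q_def using sp by simp
      also have "\<dots> \<le> ((s n)\<^sup>2 * Cst + s n * \<epsilon>) / s n"
        using bound[OF elim(2)] sp by (simp add: divide_right_mono)
      also have "\<dots> = s n * Cst + \<epsilon>" using sp by (simp add: field_simps power2_eq_square)
      also have "\<dots> \<le> 2 * \<epsilon>" using elim(1) by simp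
      finally show ?case .
    qed
  qed
  show ?thesis
    unfolding tendsto_iff
  proof (intro allI impI)
    fix e :: real assume e: "e > 0"
    show "eventually (\<lambda>n. dist ((real n / a n) powr (real k / 2) * (\<integral>x. f x \<partial>(PiM {..<k} (\<lambda>_. P n)))) 0 < e) sequentially"
      by (rule eventually_mono[OF main[of "e/4"]]) (use e in auto)
  qed
qed

end
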